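(* Let $p$ be a prime, $\sigma$ a $p$-uniform morphism on $\mathcal A_m$ and $a\in\mathbb{F}_p$. Then for every $n\in\mathbb{N}$, $M_{\sigma^n}(a)=M_\sigma(a)^n$.
   Context: $\mathcal A_m=\{0,\dots,m-1\}$. For $W=w_0\cdots w_{r-1}\in\mathcal A_m^*$ and $j\in\mathcal A_m$, $\beta_{W,j}(T)=\sum_{i:\,w_i=j}T^{r-1-i}\in\mathbb{F}_p[T]$ (zero if $j$ does not occur). For a uniform morphism $\tau$ on $\mathcal A_m$, $M_\tau(T)=(\beta_{\tau(i),j}(T))_{0\le i,j\le m-1}$, and $M_\tau(a)$ denotes its evaluation at $T=a$. *)

theory Defs
  imports "Berlekamp_Zassenhaus.Finite_Field" "Jordan_Normal_Form.Matrix"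
    "HOL-Computational_Algebra.Polynomial"
begin

text \<open>Letters of A_m are the naturals below m; words are lists; a morphism
  is given by its images of letters, sigma i for i < m.\<close>

definition uniform_morphism :: "nat \<Rightarrow> nat \<Rightarrow> (nat \<Rightarrow> nat list) \<Rightarrow> bool" where
  "uniform_morphism k m \<sigma> \<longleftrightarrow>
     (\<forall>i<m. length (\<sigma> i) = k \<and> set (\<sigma> i) \<subseteq> {..<m})"

definition morph_word :: "(nat \<Rightarrow> nat list) \<Rightarrow> nat list \<Rightarrow> nat list" where
  "morph_word \<sigma> w = concat (map \<sigma> w)"

definition morph_pow :: "(nat \<Rightarrow> nat list) \<Rightarrow> nat \<Rightarrow> nat \<Rightarrow> nat list" where
  "morph_pow \<sigma> n i = (morph_word \<sigma> ^^ n) [i]"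

definition beta :: "nat list \<Rightarrow> nat \<Rightarrow> 'a::comm_ring_1 poly" where
  "beta W j = (\<Sum>i<length W. if W ! i = j then monom 1 (length W - 1 - i) else 0)"

definition M_mat :: "nat \<Rightarrow> (nat \<Rightarrow> nat list) \<Rightarrow> 'a::comm_ring_1 poly mat" where
  "M_mat m \<tau> = mat m m (\<lambda>(i, j). beta (\<tau> i) j)"

definition M_eval :: "nat \<Rightarrow> (nat \<Rightarrow> nat list) \<Rightarrow> 'a::comm_ring_1 \<Rightarrow> 'a mat" where
  "M_eval m \<tau> a = map_mat (\<lambda>q. poly q a) (M_mat m \<tau>)"

end

theory Submission
  imports Defs "Berlekamp_Zassenhaus.Berlekamp_Type_Based"
begin

definition ev :: "nat list \<Rightarrow> nat \<Rightarrow> 'a::comm_ring_1 \<Rightarrow> 'a" where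
  "ev W j a = (\<Sum>i<length W. if W ! i = j then a ^ (length W - 1 - i) else 0)"

lemma poly_beta: "poly (beta W j) a = ev W j a"
  unfolding beta_def ev_def poly_sum by (rule sum.cong) (auto simp: poly_monom)

lemma ev_Nil[simp]: "ev [] j a = 0" by (simp add: ev_def)

lemma ev_Cons: "ev (x # W) j a = (if x = j then a ^ length W else 0) + ev W j a"
  unfolding ev_def length_Cons by (subst sum.lessThan_Suc_shift) (auto intro!: sum.cong)

lemma ev_append: "ev (U @ V) j a = ev U j a * a ^ length V + ev V j a"
  by (induction U) (auto simp: ev_Cons algebra_simps power_add)

lemma ev_concat:
  assumes "set W \<subseteq> {..<m}" "\<forall>c<m. length (\<sigma> c) = k"
  shows "ev (concat (map \<sigma> W)) j a = (\<Sum>c<m. ev W c (a ^ k) * ev (\<sigma> c) j a)"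
  using assms(1)
proof (induction W)
  case Nil then show ?case by simp
next
  case (Cons w W)
  have lenc: "length (concat (map \<sigma> W)) = k * length W"
    using Cons.prems assms(2) by (induction W) auto
  have w: "w < m" using Cons.prems by auto
  have "ev (concat (map \<sigma> (w # W))) j a
      = ev (\<sigma> w) j a * a ^ (k * length W) + ev (concat (map \<sigma> W)) j a"
    by (simp add: ev_append lenc)
  also have "ev (concat (map \<sigma> W)) j a = (\<Sum>c<m. ev W c (a ^ k) * ev (\<sigma> c) j a)"
    using Cons by auto
  also have "ev (\<sigma> w) j a * a ^ (k * length W)
      = (\<Sum>c<m. if w = c then (a ^ k) ^ length W * ev (\<sigma> c) j a else 0)"
    using w by (simp add: sum.delta power_mult mult.commute)
  also have "\<dots> = (\<Sum>c<m. (if w = c then (a ^ k) ^ length W else 0) * ev (\<sigma> c) j a)"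
    by (rule sum.cong) auto
  finally show ?case
    by (simp add: ev_Cons distrib_right sum.distrib)
qed

lemma morph_pow_Suc: "morph_pow \<sigma> (Suc n) i = concat (map \<sigma> (morph_pow \<sigma> n i))"
  by (simp add: morph_pow_def morph_word_def)

lemma morph_pow_set:
  assumes "uniform_morphism k m \<sigma>" "i < m"
  shows "set (morph_pow \<sigma> n i) \<subseteq> {..<m}"
proof (induction n)
  case 0 then show ?case using assms by (simp add: morph_pow_def)
next
  case (Suc n)
  then show ?case using assms(1) unfolding morph_pow_Suc uniform_morphism_def by auto
qed

theorem corollary4p13:
  fixes \<sigma> :: "nat \<Rightarrow> nat list" and m :: nat and a :: "'p::prime_card mod_ring"
  assumes "uniform_morphism CARD('p) m \<sigma>"
  shows "\<forall>n::nat. M_eval m (morph_pow \<sigma> n) a = M_eval m \<sigma> a ^\<^sub>m n"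
proof
  fix n
  show "M_eval m (morph_pow \<sigma> n) a = M_eval m \<sigma> a ^\<^sub>m n"
  proof (induction n)
    case 0
    show ?case
      by (rule eq_matI) (auto simp: M_eval_def M_mat_def poly_beta morph_pow_def ev_def)
  next
    case (Suc n)
    have len: "\<forall>c<m. length (\<sigma> c) = CARD('p)" using assms by (simp add: uniform_morphism_def)
    show ?case
    proof (rule eq_matI)
      fix i j assume ij: "i < dim_row (M_eval m \<sigma> a ^\<^sub>m Suc n)" "j < dim_col (M_eval m \<sigma> a ^\<^sub>m Suc n)"
      hence i: "i < m" and j: "j < m" by (auto simp: M_eval_def M_mat_def)
      have "M_eval m (morph_pow \<sigma> (Suc n)) a $$ (i, j)
          = (\<Sum>c<m. ev (morph_pow \<sigma> n i) c a * ev (\<sigma> c) j a)"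
        using i j ev_concat[OF morph_pow_set[OF assms i] len, where j=j and a=a]
        by (simp add: M_eval_def M_mat_def poly_beta morph_pow_Suc)
      also have "\<dots> = (M_eval m (morph_pow \<sigma> n) a * M_eval m \<sigma> a) $$ (i, j)"
        using i j by (simp add: M_eval_def M_mat_def poly_beta scalar_prod_def row_def col_def
            lessThan_atLeast0)
      finally show "M_eval m (morph_pow \<sigma> (Suc n)) a $$ (i, j) = (M_eval m \<sigma> a ^\<^sub>m Suc n) $$ (i, j)"
        using Suc by simp
    qed (auto simp: M_eval_def M_mat_def)
  qed
qed

end
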